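(* Let $n\in\mathbb N$, $B\in\mathcal S_n(\mathcal H)$, $J:\mathbb C^n\to\ker(B^*+i)$ an isometry, $U\in\mathrm{Ext}(B)$, and let $K_w(z)=\Omega(z)^*\Omega(w)$ with $\Omega(z)=2i\big((i-\bar z)+(i+\bar z)U\big)^{-1}J$. Then for every $z\in\mathbb C_+$ (at which the inverses exist) $$b(z)\,K_{\bar z}(-i)^{-1}K_{\bar z}(i)=\Phi[U;B](z)=b(z)\,K_i(z)^{-1}K_{-i}(z).$$
   Context: For a separable Hilbert space $\mathcal H$ and $n\in\mathbb N$, $\mathcal S_n(\mathcal H)$ is the set of linear transformations with domain in $\mathcal H$ (not necessarily dense) that are symmetric, closed, simple and have deficiency indices $(n,n)$. $\ker(B^*-z):=\mathrm{ran}(B-\bar z)^\perp$, $b(z)=\frac{z-i}{z+i}$, $b(B)=(B-i)(B+i)^{-1}$. $\mathrm{Ext}(B)$ is the set of unitaries $U$ on Hilbert spaces $\mathcal K\supseteq\mathcal H$ agreeing with $b(B)$ on $\mathrm{ran}(B+i)$ with $\mathcal K$ the smallest $U$-reducing subspace containing $\mathcal H$. For $U\in\mathrm{Ext}(B)$ with spectral measure $P_U$ on $\mathbb T$, $G_U(z)=\int_{\mathbb T}\frac{\alpha+b(z)}{\alpha-b(z)}J^*P_U(d\alpha)J$ and $\Phi[U;B]=(G_U-1)(G_U+1)^{-1}$ on $\mathbb C_+$. *)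

theory Defs
  imports "HOL-Analysis.Analysis"
begin

text \<open>The library has no complex inner product spaces, so we introduce a type class.
  The inner product is linear in the second and conjugate-linear in the first argument.
  A complex Hilbert space is a type of class cvec that is also a complete_space.\<close>

class cvec = real_normed_vector +
  fixes scaleC :: "complex \<Rightarrow> 'a \<Rightarrow> 'a"
  fixes cinner :: "'a \<Rightarrow> 'a \<Rightarrow> complex"
  assumes scaleC_add_right: "scaleC a (x + y) = scaleC a x + scaleC a y"
    and scaleC_add_left: "scaleC (a + b) x = scaleC a x + scaleC b x"
    and scaleC_scaleC: "scaleC a (scaleC b x) = scaleC (a * b) x"
    and scaleC_one: "scaleC 1 x = x"
    and scaleC_of_real: "scaleC (complex_of_real r) x = r *\<^sub>R x"
    and cinner_commute: "cinner x y = cnj (cinner y x)"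
    and cinner_add_right: "cinner x (y + z) = cinner x y + cinner x z"
    and cinner_scaleC_right: "cinner x (scaleC a y) = a * cinner x y"
    and cinner_self: "cinner x x = complex_of_real ((norm x)\<^sup>2)"

instantiation complex :: cvec
begin
definition scaleC_complex :: "complex \<Rightarrow> complex \<Rightarrow> complex" where "scaleC_complex a x = a * x"
definition cinner_complex :: "complex \<Rightarrow> complex \<Rightarrow> complex" where "cinner_complex x y = cnj x * y"
instance
proof
  fix a b x y z :: complex and r :: real
  show "scaleC a (x + y) = scaleC a x + scaleC a y" by (simp add: scaleC_complex_def distrib_left)
  show "scaleC (a + b) x = scaleC a x + scaleC b x" by (simp add: scaleC_complex_def distrib_right)
  show "scaleC a (scaleC b x) = scaleC (a * b) x" by (simp add: scaleC_complex_def mult.assoc)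
  show "scaleC 1 x = x" by (simp add: scaleC_complex_def)
  show "scaleC (complex_of_real r) x = r *\<^sub>R x" by (simp add: scaleC_complex_def scaleR_conv_of_real)
  show "cinner x y = cnj (cinner y x)" by (simp add: cinner_complex_def mult.commute)
  show "cinner x (y + z) = cinner x y + cinner x z" by (simp add: cinner_complex_def distrib_left)
  show "cinner x (scaleC a y) = a * cinner x y" by (simp add: cinner_complex_def scaleC_complex_def)
  show "cinner x x = complex_of_real ((norm x)\<^sup>2)" using complex_norm_square[of x] by (simp add: cinner_complex_def mult.commute)
qed
end

definition separable_hilbert :: "'a::{cvec, complete_space} itself \<Rightarrow> bool" where
  "separable_hilbert _ \<longleftrightarrow> (\<exists>S :: 'a set. countable S \<and> closure S = UNIV)"

definition csubspace :: "'a::cvec set \<Rightarrow> bool" where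
  "csubspace M \<longleftrightarrow> 0 \<in> M \<and> (\<forall>x\<in>M. \<forall>y\<in>M. x + y \<in> M) \<and> (\<forall>c. \<forall>x\<in>M. scaleC c x \<in> M)"

definition clinear :: "('a::cvec \<Rightarrow> 'b::cvec) \<Rightarrow> bool" where
  "clinear f \<longleftrightarrow> (\<forall>x y. f (x + y) = f x + f y) \<and> (\<forall>c x. f (scaleC c x) = scaleC c (f x))"

definition clinear_on :: "'a::cvec set \<Rightarrow> ('a \<Rightarrow> 'b::cvec) \<Rightarrow> bool" where
  "clinear_on D f \<longleftrightarrow> csubspace D \<and> (\<forall>x\<in>D. \<forall>y\<in>D. f (x + y) = f x + f y)
      \<and> (\<forall>c. \<forall>x\<in>D. f (scaleC c x) = scaleC c (f x))"

definition has_cdim :: "'a::cvec set \<Rightarrow> nat \<Rightarrow> bool" where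
  "has_cdim V m \<longleftrightarrow> (\<exists>f :: nat \<Rightarrow> 'a.
      (\<forall>i<m. \<forall>j<m. cinner (f i) (f j) = (if i = j then 1 else 0)) \<and>
      V = {\<Sum>i<m. scaleC (c i) (f i) | c. True})"

text \<open>An operator is given by its domain D and its action B on D.
  ker(B^* - z) := ran(B - conj z)^perp.\<close>
definition defect :: "'a::cvec set \<Rightarrow> ('a \<Rightarrow> 'a) \<Rightarrow> complex \<Rightarrow> 'a set" where
  "defect D B z = {y. \<forall>x\<in>D. cinner (B x - scaleC (cnj z) x) y = 0}"

definition symmetric_op :: "'a::cvec set \<Rightarrow> ('a \<Rightarrow> 'a) \<Rightarrow> bool" where
  "symmetric_op D B \<longleftrightarrow> (\<forall>x\<in>D. \<forall>y\<in>D. cinner (B x) y = cinner x (B y))"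

definition closed_op :: "'a::cvec set \<Rightarrow> ('a \<Rightarrow> 'a) \<Rightarrow> bool" where
  "closed_op D B \<longleftrightarrow> closed {(x, B x) | x. x \<in> D}"

definition reduces_op :: "'a::cvec set \<Rightarrow> ('a \<Rightarrow> 'a) \<Rightarrow> 'a set \<Rightarrow> bool" where
  "reduces_op D B M \<longleftrightarrow> (\<forall>x\<in>D. \<exists>m m'. x = m + m' \<and> m \<in> M \<and> (\<forall>u\<in>M. cinner u m' = 0)
       \<and> m \<in> D \<and> B m \<in> M \<and> (\<forall>u\<in>M. cinner u (B m') = 0))"

text \<open>The part of B in M is self-adjoint (as an operator in the Hilbert space M):
  the graph of its adjoint in M equals its graph.\<close>
definition selfadjoint_part :: "'a::cvec set \<Rightarrow> ('a \<Rightarrow> 'a) \<Rightarrow> 'a set \<Rightarrow> bool" where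
  "selfadjoint_part D B M \<longleftrightarrow>
     {(y, w). y \<in> M \<and> w \<in> M \<and> (\<forall>x\<in>D \<inter> M. cinner (B x) y = cinner x w)}
       = {(x, B x) | x. x \<in> D \<inter> M}"

definition simple_op :: "'a::cvec set \<Rightarrow> ('a \<Rightarrow> 'a) \<Rightarrow> bool" where
  "simple_op D B \<longleftrightarrow> (\<forall>M. csubspace M \<and> closed M \<and> M \<noteq> {0} \<and> reduces_op D B M
       \<longrightarrow> \<not> selfadjoint_part D B M)"

definition in_S :: "nat \<Rightarrow> 'a::{cvec, complete_space} set \<Rightarrow> ('a \<Rightarrow> 'a) \<Rightarrow> bool" where
  "in_S n D B \<longleftrightarrow> clinear_on D B \<and> symmetric_op D B \<and> closed_op D B \<and> simple_op D B
     \<and> has_cdim (defect D B \<i>) n \<and> has_cdim (defect D B (- \<i>)) n"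

definition unitary_op :: "('a::cvec \<Rightarrow> 'a) \<Rightarrow> bool" where
  "unitary_op U \<longleftrightarrow> clinear U \<and> bij U \<and> (\<forall>x. norm (U x) = norm x)"

text \<open>The inclusion H \<subseteq> K is an isometric linear embedding emb.  U is in Ext(B) if it is
  unitary on K, agrees with b(B) = (B - i)(B + i)^-1 on ran(B + i), and K is the smallest
  U-reducing (closed) subspace containing H.\<close>
definition in_Ext :: "'a::{cvec, complete_space} set \<Rightarrow> ('a \<Rightarrow> 'a) \<Rightarrow> ('a \<Rightarrow> 'k::{cvec, complete_space})
     \<Rightarrow> ('k \<Rightarrow> 'k) \<Rightarrow> bool" where
  "in_Ext D B emb U \<longleftrightarrow> clinear emb \<and> (\<forall>x. norm (emb x) = norm x) \<and> unitary_op U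
     \<and> (\<forall>x\<in>D. U (emb (B x + scaleC \<i> x)) = emb (B x - scaleC \<i> x))
     \<and> (\<forall>M. csubspace M \<and> closed M \<and> range emb \<subseteq> M \<and> U ` M \<subseteq> M \<and> inv U ` M \<subseteq> M
            \<longrightarrow> M = UNIV)"

abbreviation circ :: "complex set" where "circ \<equiv> sphere 0 1"

definition circ_sets :: "complex set set" where
  "circ_sets = sets (restrict_space borel circ)"

text \<open>Scalar measure A \<mapsto> <x, P(A) x> = |P(A) x|^2.\<close>
definition scalar_meas :: "(complex set \<Rightarrow> 'k::cvec \<Rightarrow> 'k) \<Rightarrow> 'k \<Rightarrow> complex measure" where
  "scalar_meas P x = measure_of circ circ_sets (\<lambda>A. ennreal ((norm (P A x))\<^sup>2))"

text \<open>Integral of f against the complex measure A \<mapsto> <x, P(A) y>, via polarization.\<close>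
definition spec_integral ::
    "(complex set \<Rightarrow> 'k::cvec \<Rightarrow> 'k) \<Rightarrow> (complex \<Rightarrow> complex) \<Rightarrow> 'k \<Rightarrow> 'k \<Rightarrow> complex" where
  "spec_integral P f x y =
     (\<Sum>k<(4::nat). cnj (\<i> ^ k) * integral\<^sup>L (scalar_meas P (x + scaleC (\<i> ^ k) y)) f) / 4"

text \<open>P is the spectral measure (projection-valued measure on the Borel sets of the unit
  circle) of the unitary U, i.e. U = integral of alpha dP(alpha).\<close>
definition spectral_measure_of :: "('k::{cvec, complete_space} \<Rightarrow> 'k) \<Rightarrow> (complex set \<Rightarrow> 'k \<Rightarrow> 'k) \<Rightarrow> bool" where
  "spectral_measure_of U P \<longleftrightarrow>
     (\<forall>A\<in>circ_sets. clinear (P A) \<and> (\<forall>x. P A (P A x) = P A x)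
                      \<and> (\<forall>x y. cinner (P A x) y = cinner x (P A y)))
   \<and> P circ = id
   \<and> (\<forall>A\<in>circ_sets. \<forall>A'\<in>circ_sets. P (A \<inter> A') = P A \<circ> P A')
   \<and> (\<forall>A :: nat \<Rightarrow> complex set. range A \<subseteq> circ_sets \<and> disjoint_family A
         \<longrightarrow> (\<forall>x. (\<lambda>m. P (A m) x) sums P (\<Union>m. A m) x))
   \<and> (\<forall>x. cinner x (U x) = integral\<^sup>L (scalar_meas P x) (\<lambda>\<alpha>. \<alpha>))"

definition bC :: "complex \<Rightarrow> complex" where "bC z = (z - \<i>) / (z + \<i>)"

text \<open>G_U(z) = \<integral> (\<alpha> + b z)/(\<alpha> - b z) J^* P_U(d\<alpha>) J, as an n x n matrix
  (entries w.r.t. the standard basis of C^n; J is composed with the embedding H \<subseteq> K).\<close>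
definition G_U :: "(complex set \<Rightarrow> 'k::cvec \<Rightarrow> 'k) \<Rightarrow> (complex^'n \<Rightarrow> 'k) \<Rightarrow> complex \<Rightarrow> complex^'n^'n" where
  "G_U P JK z = (\<chi> j k. spec_integral P (\<lambda>\<alpha>. (\<alpha> + bC z) / (\<alpha> - bC z))
                         (JK (axis j 1)) (JK (axis k 1)))"

definition Phi :: "(complex set \<Rightarrow> 'k::cvec \<Rightarrow> 'k) \<Rightarrow> (complex^'n \<Rightarrow> 'k) \<Rightarrow> complex \<Rightarrow> complex^'n^'n" where
  "Phi P JK z = (G_U P JK z - mat 1) ** matrix_inv (G_U P JK z + mat 1)"

definition Omega :: "('k::cvec \<Rightarrow> 'k) \<Rightarrow> (complex^'n \<Rightarrow> 'k) \<Rightarrow> complex \<Rightarrow> complex^'n \<Rightarrow> 'k" where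
  "Omega U JK z v = scaleC (2 * \<i>)
     (inv (\<lambda>x. scaleC (\<i> - cnj z) x + scaleC (\<i> + cnj z) (U x)) (JK v))"

definition Kern :: "('k::cvec \<Rightarrow> 'k) \<Rightarrow> (complex^'n \<Rightarrow> 'k) \<Rightarrow> complex \<Rightarrow> complex \<Rightarrow> complex^'n^'n" where
  "Kern U JK w z = (\<chi> j k. cinner (Omega U JK z (axis j 1)) (Omega U JK w (axis k 1)))"

end

theory Submission
  imports Defs
begin

lemma scaleC_zero_left[simp]: "scaleC 0 (x::'a::cvec) = 0"
  using scaleC_of_real[of 0 x] by simp

lemma scaleC_zero_right[simp]: "scaleC c (0::'a::cvec) = 0"
proof -
  have "scaleC c (0::'a) = scaleC c 0 + scaleC c 0" using scaleC_add_right[of c 0 0] by simp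
  then show ?thesis by simp
qed

lemma scaleC_minus_left: "scaleC (- c) (x::'a::cvec) = - scaleC c x"
proof -
  have "scaleC (c + - c) x = scaleC c x + scaleC (-c) x" by (rule scaleC_add_left)
  then show ?thesis by (simp add: eq_neg_iff_add_eq_0 add.commute)
qed

lemma scaleC_minus_right: "scaleC c (- x::'a::cvec) = - scaleC c x"
proof -
  have "scaleC c (x + - x) = scaleC c x + scaleC c (-x)" by (rule scaleC_add_right)
  then show ?thesis by (simp add: eq_neg_iff_add_eq_0 add.commute)
qed

lemma scaleC_diff_right: "scaleC c (x - y::'a::cvec) = scaleC c x - scaleC c y"
  using scaleC_add_right[of c x "-y"] by (simp add: scaleC_minus_right)

lemma scaleC_diff_left: "scaleC (c - d) (x::'a::cvec) = scaleC c x - scaleC d x"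
  using scaleC_add_left[of c "-d" x] by (simp add: scaleC_minus_left)

lemma cinner_add_left: "cinner (x + y) (z::'a::cvec) = cinner x z + cinner y z"
  by (metis cinner_commute cinner_add_right complex_cnj_add)

lemma cinner_scaleC_left: "cinner (scaleC c x) (y::'a::cvec) = cnj c * cinner x y"
  by (metis cinner_commute cinner_scaleC_right complex_cnj_mult complex_cnj_cnj)

lemma cinner_zero_right[simp]: "cinner x (0::'a::cvec) = 0"
  using cinner_scaleC_right[of x 0 0] by simp

lemma cinner_zero_left[simp]: "cinner (0::'a::cvec) x = 0"
  using cinner_scaleC_left[of 0 0 x] by simp

lemma cinner_minus_right: "cinner x (- y::'a::cvec) = - cinner x y"
  using cinner_scaleC_right[of x "-1" y] by (simp add: scaleC_minus_left scaleC_one)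

lemma cinner_minus_left: "cinner (- x::'a::cvec) y = - cinner x y"
  using cinner_scaleC_left[of "-1" x y] by (simp add: scaleC_minus_left scaleC_one)

lemma cinner_diff_right: "cinner x (y - z::'a::cvec) = cinner x y - cinner x z"
  using cinner_add_right[of x y "-z"] by (simp add: cinner_minus_right)

lemma cinner_diff_left: "cinner (x - y) (z::'a::cvec) = cinner x z - cinner y z"
  using cinner_add_left[of x "-y" z] by (simp add: cinner_minus_left)

lemmas cinner_simps = cinner_add_left cinner_add_right cinner_diff_left cinner_diff_right
  cinner_scaleC_left cinner_scaleC_right cinner_minus_left cinner_minus_right

lemma cinner_self_eq_zero: "cinner x x = 0 \<longleftrightarrow> (x::'a::cvec) = 0"
  using cinner_self[of x] by simp

lemma norm_sq_cinner: "complex_of_real ((norm (x::'a::cvec))^2) = cinner x x"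
  by (simp add: cinner_self)

lemma norm_scaleC: "norm (scaleC c (x::'a::cvec)) = cmod c * norm x"
proof -
  have "complex_of_real ((norm (scaleC c x))^2) = cnj c * c * complex_of_real ((norm x)^2)"
    unfolding norm_sq_cinner by (simp add: cinner_simps mult.assoc)
  also have "cnj c * c = complex_of_real ((cmod c)^2)"
    using complex_norm_square[of c] by (simp add: mult.commute)
  finally have "(norm (scaleC c x))^2 = (cmod c * norm x)^2"
    by (simp only: of_real_mult[symmetric] of_real_eq_iff power_mult_distrib)
  then show ?thesis by (simp add: power2_eq_iff_nonneg)
qed

lemma Re_cinner_norm:
  "(norm (x + y::'a::cvec))^2 = (norm x)^2 + (norm y)^2 + 2 * Re (cinner x y)"
proof -
  have "complex_of_real ((norm (x + y))^2) = cinner x x + cinner y y + (cinner x y + cnj (cinner x y))"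
    unfolding norm_sq_cinner by (simp add: cinner_simps cinner_commute[of y x])
  also have "cinner x y + cnj (cinner x y) = complex_of_real (2 * Re (cinner x y))"
    by (simp add: complex_add_cnj)
  finally have "complex_of_real ((norm (x + y))^2) = complex_of_real ((norm x)^2 + (norm y)^2 + 2 * Re (cinner x y))"
    unfolding norm_sq_cinner[symmetric] by simp
  then show ?thesis by (simp only: of_real_eq_iff)
qed

lemma cinner_eqI:
  assumes "Re (cinner a b) = Re (cinner c d)"
      and "Re (cinner a (scaleC (-\<i>) b)) = Re (cinner c (scaleC (-\<i>) d))"
  shows "cinner a (b::'a::cvec) = cinner c (d::'b::cvec)"
  using assms by (simp add: cinner_scaleC_right complex_eq_iff)


lemma clinearD:
  assumes "clinear f"
  shows "f (x + y) = f x + f y" "f (scaleC c x) = scaleC c (f x)" "f (x - y) = f x - f y"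
    "f 0 = 0" "f (- x) = - f x"
proof -
  have A: "\<And>x y. f (x + y) = f x + f y" and S: "\<And>c x. f (scaleC c x) = scaleC c (f x)"
    using assms by (auto simp: clinear_def)
  show "f (x + y) = f x + f y" by (rule A)
  show "f (scaleC c x) = scaleC c (f x)" by (rule S)
  show "f 0 = 0" using S[of 0 0] by simp
  have m: "\<And>x. f (- x) = - f x"
  proof -
    fix x
    have "f (scaleC (-1) x) = scaleC (-1) (f x)" by (rule S)
    then show "f (- x) = - f x" by (simp add: scaleC_minus_left scaleC_one)
  qed
  show "f (- x) = - f x" by (rule m)
  show "f (x - y) = f x - f y" using A[of x "-y"] m[of y] by simp
qed

lemma isometry_cinner:
  assumes "clinear f" "\<And>x. norm (f x) = norm x"
  shows "cinner (f x) (f y) = cinner x y"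
proof (rule cinner_eqI)
  have *: "\<And>a b. Re (cinner (f a) (f b)) = Re (cinner a b)"
  proof -
    fix a b
    have "f a + f b = f (a + b)" using clinearD(1)[OF assms(1)] by simp
    then have "norm (f a + f b) = norm (a + b)" using assms(2) by simp
    then have "(norm (f a + f b))^2 = (norm (a + b))^2" by simp
    then show "Re (cinner (f a) (f b)) = Re (cinner a b)"
      unfolding Re_cinner_norm assms(2) by simp
  qed
  show "Re (cinner (f x) (f y)) = Re (cinner x y)" by (rule *)
  have "f (scaleC (- \<i>) y) = scaleC (- \<i>) (f y)" by (rule clinearD(2)[OF assms(1)])
  then show "Re (cinner (f x) (scaleC (- \<i>) (f y))) = Re (cinner x (scaleC (- \<i>) y))"
    using *[of x "scaleC (-\<i>) y"] by simp
qed

lemma unitary_facts: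
  assumes "unitary_op U"
  shows "clinear U" "\<And>x. norm (U x) = norm x" "\<And>x y. cinner (U x) (U y) = cinner x y"
    "\<And>y. U (inv U y) = y" "\<And>x. inv U (U x) = x"
proof -
  show c: "clinear U" and n: "\<And>x. norm (U x) = norm x" using assms unfolding unitary_op_def by auto
  show "\<And>x y. cinner (U x) (U y) = cinner x y" by (rule isometry_cinner[OF c n])
  have b: "bij U" using assms unfolding unitary_op_def by auto
  show "\<And>y. U (inv U y) = y" using b by (simp add: bij_is_surj surj_f_inv_f)
  show "\<And>x. inv U (U x) = x" using b by (simp add: bij_is_inj inv_f_f)
qed

lemma surj_combo:
  fixes U :: "'a::{cvec,complete_space} \<Rightarrow> 'a"
  assumes U: "unitary_op U" and ab: "cmod a \<noteq> cmod b"
  shows "surj (\<lambda>x. scaleC a x + scaleC b (U x))"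
proof -
  note Uf = unitary_facts[OF U]
  have "\<exists>x. scaleC a x + scaleC b (U x) = y" for y
  proof (cases "cmod b < cmod a")
    case True
    then have a0: "a \<noteq> 0" by auto
    define f where "f x = scaleC (1/a) (y - scaleC b (U x))" for x
    have "dist (f x) (f x') \<le> (cmod b / cmod a) * dist x x'" for x x'
    proof -
      have "f x - f x' = scaleC (1/a) (scaleC b (U x' - U x))"
        by (simp add: f_def scaleC_diff_right)
      also have "U x' - U x = U (x' - x)" using clinearD(3)[OF Uf(1)] by simp
      finally have "norm (f x - f x') = (cmod b / cmod a) * norm (x' - x)"
        by (simp add: norm_scaleC Uf(2) norm_divide)
      then show ?thesis by (simp add: dist_norm norm_minus_commute)
    qed
    moreover have "0 \<le> cmod b / cmod a" "cmod b / cmod a < 1" using True a0 by auto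
    ultimately have "\<exists>!x. f x = x" by (intro banach_fix_type[where c="cmod b / cmod a" and f=f]) auto
    then obtain x where "f x = x" by (auto simp: Ex1_def)
    then have "scaleC a x = scaleC a (f x)" by simp
    also have "\<dots> = y - scaleC b (U x)" using a0 by (simp add: f_def scaleC_scaleC scaleC_one)
    finally show ?thesis by (intro exI[of _ x]) (simp add: eq_diff_eq add.commute)
  next
    case False
    then have lt: "cmod a < cmod b" using ab by auto
    then have b0: "b \<noteq> 0" by auto
    define f where "f x = inv U (scaleC (1/b) (y - scaleC a x))" for x
    have "dist (f x) (f x') \<le> (cmod a / cmod b) * dist x x'" for x x'
    proof -
      have "dist (f x) (f x') = norm (U (f x - f x'))" by (simp add: dist_norm Uf(2))
      also have "U (f x - f x') = U (f x) - U (f x')" by (rule clinearD(3)[OF Uf(1)])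
      also have "U (f x) - U (f x') = scaleC (1/b) (scaleC a (x' - x))"
        by (simp add: f_def Uf(4) scaleC_diff_right)
      finally show ?thesis by (simp add: norm_scaleC norm_divide dist_norm norm_minus_commute)
    qed
    moreover have "0 \<le> cmod a / cmod b" "cmod a / cmod b < 1" using lt b0 by auto
    ultimately have "\<exists>!x. f x = x" by (intro banach_fix_type[where c="cmod a / cmod b" and f=f]) auto
    then obtain x where "f x = x" by (auto simp: Ex1_def)
    then have "scaleC b (U x) = scaleC b (U (f x))" by simp
    also have "\<dots> = y - scaleC a x" using b0 by (simp add: f_def Uf(4) scaleC_scaleC scaleC_one)
    finally show ?thesis by (intro exI[of _ x]) (simp add: eq_diff_eq add.commute)
  qed
  then show ?thesis by (metis surj_def)
qed


abbreviation M0 :: "complex measure" where "M0 \<equiv> restrict_space borel circ"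

lemma space_M0: "space M0 = circ" by (simp add: space_restrict_space)
lemma sa: "sigma_algebra circ circ_sets"
  using sets.sigma_algebra_axioms[of M0] by (simp add: space_M0 circ_sets_def)
lemma cs_sub: "A \<in> circ_sets \<Longrightarrow> A \<subseteq> circ"
  using sets.sets_into_space[of A M0] by (simp add: circ_sets_def space_M0)
lemma cs_top: "circ \<in> circ_sets" using sets.top[of M0] by (simp add: circ_sets_def space_M0)
lemma cs_empty: "{} \<in> circ_sets" by (simp add: circ_sets_def)
lemma cs_Int: "A \<in> circ_sets \<Longrightarrow> B \<in> circ_sets \<Longrightarrow> A \<inter> B \<in> circ_sets" by (simp add: circ_sets_def sets.Int)
lemma cs_Un: "A \<in> circ_sets \<Longrightarrow> B \<in> circ_sets \<Longrightarrow> A \<union> B \<in> circ_sets" by (simp add: circ_sets_def sets.Un)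
lemma cs_Diff: "A \<in> circ_sets \<Longrightarrow> B \<in> circ_sets \<Longrightarrow> A - B \<in> circ_sets" by (simp add: circ_sets_def sets.Diff)

locale spec =
  fixes U :: "'k::{cvec,complete_space} \<Rightarrow> 'k" and P :: "complex set \<Rightarrow> 'k \<Rightarrow> 'k"
  assumes U: "unitary_op U" and SP: "spectral_measure_of U P"
begin

lemma P_lin: "A \<in> circ_sets \<Longrightarrow> clinear (P A)" using SP by (simp add: spectral_measure_of_def)
lemma P_idem: "A \<in> circ_sets \<Longrightarrow> P A (P A x) = P A x" using SP by (simp add: spectral_measure_of_def)
lemma P_sa: "A \<in> circ_sets \<Longrightarrow> cinner (P A x) y = cinner x (P A y)" using SP by (simp add: spectral_measure_of_def)
lemma P_circ: "P circ x = x" using SP by (simp add: spectral_measure_of_def)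
lemma P_comp: "A \<in> circ_sets \<Longrightarrow> B \<in> circ_sets \<Longrightarrow> P (A \<inter> B) x = P A (P B x)"
  using SP by (simp add: spectral_measure_of_def)
lemma P_sums: "range F \<subseteq> circ_sets \<Longrightarrow> disjoint_family F \<Longrightarrow> (\<lambda>m. P (F m) x) sums P (\<Union>m. F m) x"
  using SP by (simp add: spectral_measure_of_def)
lemma P_U: "cinner x (U x) = integral\<^sup>L (scalar_meas P x) (\<lambda>\<alpha>. \<alpha>)"
  using SP by (simp add: spectral_measure_of_def)

lemma P_empty: "P {} x = 0"
proof -
  have "(\<lambda>m. P ((\<lambda>_::nat. {}) m) x) sums P (\<Union>m. (\<lambda>_::nat. {}) m) x"
    by (rule P_sums) (auto simp: cs_empty disjoint_family_on_def)
  then have "(\<lambda>m::nat. P {} x) sums P {} x" by simp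
  then have "(\<lambda>m::nat. P {} x) \<longlonglongrightarrow> 0" using summable_LIMSEQ_zero sums_summable by blast
  then show ?thesis using LIMSEQ_const_iff by blast
qed

lemma P_Un: assumes "A \<in> circ_sets" "B \<in> circ_sets" "A \<inter> B = {}"
  shows "P (A \<union> B) x = P A x + P B x"
proof -
  define F where "F n = (if n = 0 then A else if n = 1 then B else {})" for n :: nat
  have r: "range F \<subseteq> circ_sets" using assms by (auto simp: F_def cs_empty)
  have d: "disjoint_family F" using assms(3) unfolding disjoint_family_on_def F_def by auto
  have u: "(\<Union>m. F m) = A \<union> B"
  proof
    show "(\<Union>m. F m) \<subseteq> A \<union> B" by (auto simp: F_def split: if_splits)
    have "F 0 = A" "F 1 = B" by (auto simp: F_def)
    then show "A \<union> B \<subseteq> (\<Union>m. F m)" by blast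
  qed
  have s1: "(\<lambda>m. P (F m) x) sums P (A \<union> B) x" using P_sums[OF r d, of x] u by simp
  have s2: "(\<lambda>m. P (F m) x) sums (\<Sum>n\<in>{0,1}. P (F n) x)"
    by (rule sums_finite) (auto simp: F_def P_empty)
  from sums_unique2[OF s1 s2] show ?thesis by (simp add: F_def)
qed

lemma P_compl: "A \<in> circ_sets \<Longrightarrow> P (circ - A) x = x - P A x"
proof -
  assume A: "A \<in> circ_sets"
  have d: "A \<inter> (circ - A) = {}" by auto
  have u: "A \<union> (circ - A) = circ" using cs_sub[OF A] by auto
  have "P circ x = P A x + P (circ - A) x"
    using P_Un[OF A cs_Diff[OF cs_top A] d, of x] u by simp
  then show ?thesis using P_circ[of x] by (simp add: eq_diff_eq add.commute)
qed

lemma P_orth: "A \<in> circ_sets \<Longrightarrow> B \<in> circ_sets \<Longrightarrow> cinner (P A x) (P B y) = cinner x (P (A \<inter> B) y)"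
  by (simp add: P_sa P_comp)

lemma normP_sq: "A \<in> circ_sets \<Longrightarrow> complex_of_real ((norm (P A x))^2) = cinner x (P A x)"
  unfolding norm_sq_cinner by (simp add: P_orth)

lemma P_partial:
  fixes F :: "nat \<Rightarrow> complex set" and n :: nat
  assumes r: "range F \<subseteq> circ_sets" and d: "disjoint_family F"
  shows "(\<Sum>i<n. P (F i) x) = P (\<Union>i<n. F i) x \<and> (\<Union>i<n. F i) \<in> circ_sets
      \<and> (\<Sum>i<n. (norm (P (F i) x))^2) = (norm (P (\<Union>i<n. F i) x))^2"
proof (induction n)
  case 0
  then show ?case by (simp add: P_empty cs_empty)
next
  case (Suc n)
  let ?S = "\<Union>i<n. F i"
  have Fn: "F n \<in> circ_sets" using r by auto
  have dj: "?S \<inter> F n = {}"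
  proof -
    have "\<And>i. i < n \<Longrightarrow> F i \<inter> F n = {}" using d unfolding disjoint_family_on_def by auto
    then show ?thesis by blast
  qed
  have eq: "(\<Union>i<Suc n. F i) = ?S \<union> F n" by (auto simp: lessThan_Suc)
  have S: "?S \<in> circ_sets" using Suc.IH by blast
  have pu: "P (?S \<union> F n) x = P ?S x + P (F n) x" by (rule P_Un[OF S Fn dj])
  have o: "cinner (P ?S x) (P (F n) x) = 0" using P_orth[OF S Fn] dj by (simp add: P_empty)
  have "(norm (P (?S \<union> F n) x))^2 = (norm (P ?S x))^2 + (norm (P (F n) x))^2"
    unfolding pu Re_cinner_norm o by simp
  then show ?case using Suc.IH pu eq S Fn by (simp add: cs_Un)
qed

lemma P_norm_sums:
  fixes F :: "nat \<Rightarrow> complex set"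
  assumes r: "range F \<subseteq> circ_sets" and d: "disjoint_family F"
  shows "(\<lambda>i. (norm (P (F i) x))^2) sums (norm (P (\<Union>i. F i) x))^2"
proof -
  have c: "(\<lambda>n. \<Sum>i<n. P (F i) x) \<longlonglongrightarrow> P (\<Union>i. F i) x"
    using P_sums[OF r d, of x] unfolding sums_def .
  have L: "(\<lambda>n. (norm (\<Sum>i<n. P (F i) x))^2) \<longlonglongrightarrow> (norm (P (\<Union>i. F i) x))^2"
    by (intro tendsto_power tendsto_norm c)
  have E: "(\<lambda>n. (norm (\<Sum>i<n. P (F i) x))^2) = (\<lambda>n. \<Sum>i<n. (norm (P (F i) x))^2)"
  proof
    fix n
    have p: "(\<Sum>i<n. P (F i) x) = P (\<Union>i<n. F i) x"
      and q: "(\<Sum>i<n. (norm (P (F i) x))^2) = (norm (P (\<Union>i<n. F i) x))^2"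
      using P_partial[OF r d, where n=n and x=x] by auto
    show "(norm (\<Sum>i<n. P (F i) x))^2 = (\<Sum>i<n. (norm (P (F i) x))^2)" unfolding p q ..
  qed
  show ?thesis using L unfolding E sums_def .
qed

lemma mu_emeasure: "A \<in> circ_sets \<Longrightarrow> emeasure (scalar_meas P x) A = ennreal ((norm (P A x))^2)"
  unfolding scalar_meas_def
proof (rule emeasure_measure_of_sigma[OF sa])
  show "positive circ_sets (\<lambda>A. ennreal ((norm (P A x))\<^sup>2))"
    by (simp add: positive_def P_empty)
  show "countably_additive circ_sets (\<lambda>A. ennreal ((norm (P A x))\<^sup>2))"
    unfolding countably_additive_def
  proof (intro allI impI)
    fix F :: "nat \<Rightarrow> complex set"
    assume r: "range F \<subseteq> circ_sets" and d: "disjoint_family F"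
    have s: "(\<lambda>i. (norm (P (F i) x))^2) sums (norm (P (\<Union>i. F i) x))^2" by (rule P_norm_sums[OF r d])
    have sm: "summable (\<lambda>i. (norm (P (F i) x))^2)" using s by (rule sums_summable)
    have "(\<Sum>i. ennreal ((norm (P (F i) x))^2)) = ennreal (\<Sum>i. (norm (P (F i) x))^2)"
      by (rule suminf_ennreal2[OF _ sm]) simp
    also have "(\<Sum>i. (norm (P (F i) x))^2) = (norm (P (\<Union>i. F i) x))^2"
      using s by (rule sums_unique[symmetric])
    finally show "(\<Sum>i. ennreal ((norm (P (F i) x))\<^sup>2)) = ennreal ((norm (P (\<Union> (range F)) x))\<^sup>2)" .
  qed
qed

lemma mu_sets: "sets (scalar_meas P x) = circ_sets"
proof -
  have "circ_sets \<subseteq> Pow circ" using cs_sub by blast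
  then show ?thesis unfolding scalar_meas_def
    by (simp add: sets_measure_of sigma_algebra.sigma_sets_eq[OF sa])
qed

lemma mu_space: "space (scalar_meas P x) = circ"
  unfolding scalar_meas_def using cs_sub by (subst space_measure_of) auto

lemma mu_finite: "finite_measure (scalar_meas P x)"
  by (rule finite_measureI) (simp add: mu_space mu_emeasure cs_top)

lemma mu_measure: "A \<in> circ_sets \<Longrightarrow> measure (scalar_meas P x) A = (norm (P A x))^2"
  by (simp add: measure_def mu_emeasure)

lemma mu_total: "measure (scalar_meas P x) circ = (norm x)^2"
  by (simp add: mu_measure cs_top P_circ)

lemma mu_borel: "f \<in> borel_measurable borel \<Longrightarrow> f \<in> borel_measurable (scalar_meas P x)"
proof -
  assume "f \<in> borel_measurable borel"
  then have "f \<in> borel_measurable M0" by (rule measurable_restrict_space1)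
  moreover have "sets (scalar_meas P x) = sets M0" by (simp add: mu_sets circ_sets_def)
  ultimately show ?thesis using measurable_cong_sets[of "scalar_meas P x" M0 borel borel] by simp
qed

lemma mu_integrable:
  fixes f :: "complex \<Rightarrow> 'b::{banach,second_countable_topology}"
  assumes "f \<in> borel_measurable borel" "\<And>\<alpha>. \<alpha> \<in> circ \<Longrightarrow> norm (f \<alpha>) \<le> B"
  shows "integrable (scalar_meas P x) f"
proof -
  have "AE \<alpha> in scalar_meas P x. norm (f \<alpha>) \<le> B" by (rule AE_I2) (simp add: mu_space assms(2))
  then show ?thesis using finite_measure.integrable_const_bound[OF mu_finite] mu_borel[OF assms(1)] by blast
qed

end

context spec
begin

lemma Ulin: "U (x + y) = U x + U y" "U (scaleC c x) = scaleC c (U x)" "U (x - y) = U x - U y"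
  using clinearD[OF unitary_facts(1)[OF U]] by auto
lemma Ucinner: "cinner (U x) (U y) = cinner x y" using unitary_facts(3)[OF U] by auto

lemma Plin: "A \<in> circ_sets \<Longrightarrow> P A (x + y) = P A x + P A y"
  "A \<in> circ_sets \<Longrightarrow> P A (scaleC c x) = scaleC c (P A x)"
  "A \<in> circ_sets \<Longrightarrow> P A (x - y) = P A x - P A y"
  using clinearD[OF P_lin] by auto

lemma mu_restrict:
  assumes A: "A \<in> circ_sets"
  shows "scalar_meas P (P A y) = density (scalar_meas P y) (\<lambda>\<alpha>. ennreal (indicator A \<alpha>))"
proof (rule measure_eqI)
  show "sets (scalar_meas P (P A y)) = sets (density (scalar_meas P y) (\<lambda>\<alpha>. ennreal (indicator A \<alpha>)))"
    by (simp add: mu_sets)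
  fix B assume "B \<in> sets (scalar_meas P (P A y))"
  then have B: "B \<in> circ_sets" by (simp add: mu_sets)
  have Am[measurable]: "A \<in> sets (scalar_meas P y)" using A by (simp add: mu_sets)
  have Bm: "B \<in> sets (scalar_meas P y)" using B by (simp add: mu_sets)
  have "emeasure (density (scalar_meas P y) (\<lambda>\<alpha>. ennreal (indicator A \<alpha>))) B
      = (\<integral>\<^sup>+ \<alpha>. ennreal (indicator A \<alpha>) * indicator B \<alpha> \<partial>scalar_meas P y)"
    by (rule emeasure_density[OF _ Bm]) measurable
  also have "\<dots> = (\<integral>\<^sup>+ \<alpha>. indicator (B \<inter> A) \<alpha> \<partial>scalar_meas P y)"
    by (intro nn_integral_cong) (auto simp: indicator_def)
  also have "\<dots> = emeasure (scalar_meas P y) (B \<inter> A)" using cs_Int[OF B A] by (simp add: mu_sets)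
  also have "\<dots> = ennreal ((norm (P (B \<inter> A) y))^2)" by (rule mu_emeasure[OF cs_Int[OF B A]])
  finally show "emeasure (scalar_meas P (P A y)) B
      = emeasure (density (scalar_meas P y) (\<lambda>\<alpha>. ennreal (indicator A \<alpha>))) B"
    using mu_emeasure[OF B] P_comp[OF B A] by simp
qed

lemma int_restrict:
  fixes g :: "complex \<Rightarrow> 'b::{banach,second_countable_topology}"
  assumes A: "A \<in> circ_sets" and g: "g \<in> borel_measurable borel"
  shows "integral\<^sup>L (scalar_meas P (P A y)) g = integral\<^sup>L (scalar_meas P y) (\<lambda>\<alpha>. indicator A \<alpha> *\<^sub>R g \<alpha>)"
proof -
  have Am[measurable]: "A \<in> sets (scalar_meas P y)" using A by (simp add: mu_sets)
  show ?thesis unfolding mu_restrict[OF A]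
    by (rule integral_density) (auto simp: mu_borel[OF g])
qed

lemma cs_borel: "A \<in> circ_sets \<Longrightarrow> A \<in> sets borel"
proof -
  have "circ \<in> sets borel" by (simp add: borel_closed)
  then show "A \<in> circ_sets \<Longrightarrow> A \<in> sets borel"
    unfolding circ_sets_def by (subst (asm) sets_restrict_space_iff) auto
qed

lemma id_borel: "(\<lambda>\<alpha>::complex. \<alpha>) \<in> borel_measurable borel" by simp
lemma cnj_borel: "(\<lambda>\<alpha>::complex. cnj \<alpha>) \<in> borel_measurable borel"
  by (intro borel_measurable_continuous_onI continuous_intros)

lemma cross0:
  assumes A: "A \<in> circ_sets"
  shows "cinner (P A x) (U (P (circ - A) x)) + cinner (P (circ - A) x) (U (P A x)) = 0"
proof -
  let ?A' = "circ - A"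
  have A': "?A' \<in> circ_sets" using A cs_top cs_Diff by auto
  have Am[measurable]: "A \<in> sets borel" "?A' \<in> sets borel" using cs_borel A A' by auto
  have i1: "integral\<^sup>L (scalar_meas P (P A x)) (\<lambda>\<alpha>. \<alpha>) = integral\<^sup>L (scalar_meas P x) (\<lambda>\<alpha>. indicator A \<alpha> *\<^sub>R \<alpha>)"
    by (rule int_restrict[OF A id_borel])
  have i2: "integral\<^sup>L (scalar_meas P (P ?A' x)) (\<lambda>\<alpha>. \<alpha>) = integral\<^sup>L (scalar_meas P x) (\<lambda>\<alpha>. indicator ?A' \<alpha> *\<^sub>R \<alpha>)"
    by (rule int_restrict[OF A' id_borel])
  have int1: "integrable (scalar_meas P x) (\<lambda>\<alpha>. indicator A \<alpha> *\<^sub>R \<alpha>)"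
    by (rule mu_integrable[where B=1]) (auto simp: indicator_def)
  have int2: "integrable (scalar_meas P x) (\<lambda>\<alpha>. indicator ?A' \<alpha> *\<^sub>R \<alpha>)"
    by (rule mu_integrable[where B=1]) (auto simp: indicator_def)
  have "integral\<^sup>L (scalar_meas P x) (\<lambda>\<alpha>. indicator A \<alpha> *\<^sub>R \<alpha>) + integral\<^sup>L (scalar_meas P x) (\<lambda>\<alpha>. indicator ?A' \<alpha> *\<^sub>R \<alpha>)
     = integral\<^sup>L (scalar_meas P x) (\<lambda>\<alpha>. indicator A \<alpha> *\<^sub>R \<alpha> + indicator ?A' \<alpha> *\<^sub>R \<alpha>)"
    using int1 int2 by simp
  also have "\<dots> = integral\<^sup>L (scalar_meas P x) (\<lambda>\<alpha>. \<alpha>)"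
    by (rule Bochner_Integration.integral_cong[OF refl]) (auto simp: mu_space indicator_def)
  finally have "cinner (P A x) (U (P A x)) + cinner (P ?A' x) (U (P ?A' x)) = cinner x (U x)"
    using i1 i2 P_U by simp
  moreover have "x = P A x + P ?A' x" using P_compl[OF A] by simp
  ultimately have "cinner (P A x) (U (P A x)) + cinner (P ?A' x) (U (P ?A' x))
     = cinner (P A x + P ?A' x) (U (P A x + P ?A' x))" by simp
  then show ?thesis by (simp add: Ulin cinner_simps algebra_simps)
qed

lemma orth:
  assumes A: "A \<in> circ_sets"
  shows "cinner (P A u) (U (P (circ - A) v)) = 0"
proof -
  let ?A' = "circ - A"
  have A': "?A' \<in> circ_sets" using A cs_top cs_Diff by auto
  have dj: "A \<inter> ?A' = {}" "?A' \<inter> A = {}" by auto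
  define p where "p = P A u"
  define q where "q = P ?A' v"
  have e: "cnj c * cinner q (U p) + c * cinner p (U q) = 0" for c
  proof -
    define x where "x = p + scaleC c q"
    have "P A x = p" unfolding x_def p_def q_def
      using P_comp[OF A A', of v, symmetric] P_idem[OF A] dj by (simp add: Plin A P_empty)
    moreover have "P ?A' x = scaleC c q" unfolding x_def p_def q_def
      using P_comp[OF A' A, of u, symmetric] P_idem[OF A'] dj by (simp add: Plin A' P_empty)
    ultimately show ?thesis using cross0[OF A, of x]
      by (simp add: Ulin cinner_simps algebra_simps)
  qed
  have e1: "cinner q (U p) + cinner p (U q) = 0" using e[of 1] by simp
  have e2: "- \<i> * cinner q (U p) + \<i> * cinner p (U q) = 0" using e[of \<i>] by simp
  from e1 e2 have "cinner p (U q) = 0" by (simp add: algebra_simps)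
  then show ?thesis by (simp add: p_def q_def)
qed

lemma compl_compl: "A \<in> circ_sets \<Longrightarrow> circ - (circ - A) = A" using cs_sub by auto

lemma kill:
  assumes B: "B \<in> circ_sets" and h: "\<And>u. cinner (P B u) w = 0"
  shows "P B w = 0"
proof -
  have "cinner (P B w) (P B w) = cinner (P B w) w"
    by (simp add: P_orth[OF B B] P_sa[OF B] P_idem[OF B])
  then have "cinner (P B w) (P B w) = 0" using h by simp
  then show ?thesis by (simp add: cinner_self_eq_zero)
qed

lemma commute:
  assumes A: "A \<in> circ_sets"
  shows "U (P A v) = P A (U v)"
proof -
  let ?A' = "circ - A"
  have A': "?A' \<in> circ_sets" using A cs_top cs_Diff by auto
  have k1: "P ?A' (U (P A v)) = 0"
    by (rule kill[OF A']) (use orth[OF A', of _ v] compl_compl[OF A] in simp)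
  have k2: "P A (U (P ?A' v)) = 0"
    by (rule kill[OF A]) (use orth[OF A, of _ v] in simp)
  have s1: "U (P A v) = P A (U (P A v))" using P_compl[OF A, of "U (P A v)"] k1 by simp
  have "P A (U v) = P A (U (P A v + P ?A' v))" using P_compl[OF A, of v] by simp
  also have "\<dots> = P A (U (P A v)) + P A (U (P ?A' v))" by (simp add: Ulin Plin A)
  finally show ?thesis using k2 s1 by simp
qed

end

lemma circ_mult: "cmod \<alpha> = 1 \<Longrightarrow> \<alpha> * cnj \<alpha> = 1"
  using complex_norm_square[of \<alpha>] by simp

lemma sq_expand: "cmod \<alpha> = 1 \<Longrightarrow> complex_of_real ((cmod (\<alpha> - b))^2) = (1 + b * cnj b) + (- cnj b) * \<alpha> + (- b) * cnj \<alpha>"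
proof -
  assume a: "cmod \<alpha> = 1"
  have "complex_of_real ((cmod (\<alpha> - b))^2) = (\<alpha> - b) * cnj (\<alpha> - b)" by (rule complex_norm_square)
  also have "\<dots> = \<alpha> * cnj \<alpha> + b * cnj b - cnj b * \<alpha> - b * cnj \<alpha>" by (simp add: algebra_simps)
  finally show ?thesis using circ_mult[OF a] by simp
qed

lemma sum4: "(\<Sum>k<(4::nat). f k) = f 0 + f 1 + f 2 + f 3"
  by (simp add: eval_nat_numeral)

lemma cinner_expand:
  "cinner (x + scaleC c x') (X + scaleC c X') = cinner x X + c * cinner x X' + cnj c * cinner x' X + cnj c * c * cinner x' X'"
  by (simp add: cinner_simps algebra_simps)

context spec
begin

lemma g_borel: "(\<lambda>\<alpha>::complex. (cmod (\<alpha> - b))^2) \<in> borel_measurable borel"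
  by (intro borel_measurable_continuous_onI continuous_intros)

lemma lin_int:
  "integral\<^sup>L (scalar_meas P x) (\<lambda>\<alpha>. c0 + c1 * \<alpha> + c2 * cnj \<alpha>)
     = c0 * complex_of_real ((norm x)^2) + c1 * cinner x (U x) + c2 * cnj (cinner x (U x))"
proof -
  let ?M = "scalar_meas P x"
  have i1: "integrable ?M (\<lambda>\<alpha>. c1 * \<alpha>)"
    by (rule mu_integrable[where B="cmod c1"]) (auto simp: norm_mult)
  have i2: "integrable ?M (\<lambda>\<alpha>. c2 * cnj \<alpha>)"
    by (rule mu_integrable[where B="cmod c2"]) (auto simp: norm_mult intro!: borel_measurable_continuous_onI continuous_intros)
  have i3: "integrable ?M (\<lambda>\<alpha>. c0)"
    by (rule mu_integrable[where B="cmod c0"]) auto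
  have "integral\<^sup>L ?M (\<lambda>\<alpha>. c0 + c1 * \<alpha> + c2 * cnj \<alpha>)
      = integral\<^sup>L ?M (\<lambda>\<alpha>. c0) + integral\<^sup>L ?M (\<lambda>\<alpha>. c1 * \<alpha>) + integral\<^sup>L ?M (\<lambda>\<alpha>. c2 * cnj \<alpha>)"
    using i1 i2 i3 by simp
  also have "integral\<^sup>L ?M (\<lambda>\<alpha>. c0) = c0 * complex_of_real ((norm x)^2)"
    by (simp add: mu_space mu_total scaleR_conv_of_real mult.commute)
  also have "integral\<^sup>L ?M (\<lambda>\<alpha>. c1 * \<alpha>) = c1 * cinner x (U x)"
    by (simp add: P_U)
  also have "integral\<^sup>L ?M (\<lambda>\<alpha>. c2 * cnj \<alpha>) = c2 * cnj (cinner x (U x))"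
    by (simp add: P_U)
  finally show ?thesis .
qed

lemma mu_density:
  assumes x: "x = U y - scaleC b y"
  shows "scalar_meas P x = density (scalar_meas P y) (\<lambda>\<alpha>. ennreal ((cmod (\<alpha> - b))^2))"
proof (rule measure_eqI)
  show "sets (scalar_meas P x) = sets (density (scalar_meas P y) (\<lambda>\<alpha>. ennreal ((cmod (\<alpha> - b))^2)))"
    by (simp add: mu_sets)
  fix B assume "B \<in> sets (scalar_meas P x)"
  then have B: "B \<in> circ_sets" by (simp add: mu_sets)
  have Bm[measurable]: "B \<in> sets borel" by (rule cs_borel[OF B])
  have Bm2: "B \<in> sets (scalar_meas P y)" using B by (simp add: mu_sets)
  define w where "w = P B y"
  have Px: "P B x = U w - scaleC b w" by (simp add: x w_def Plin B commute[OF B])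
  have gm: "(\<lambda>\<alpha>. ennreal ((cmod (\<alpha> - b))^2)) \<in> borel_measurable (scalar_meas P y)"
    by (intro measurable_compose[OF mu_borel[OF g_borel]] measurable_ennreal)
  have gint: "integrable (scalar_meas P y) (\<lambda>\<alpha>. indicator B \<alpha> * (cmod (\<alpha> - b))^2)"
  proof (rule mu_integrable[where B="(1 + cmod b)^2"])
    show "(\<lambda>\<alpha>. indicator B \<alpha> * (cmod (\<alpha> - b))\<^sup>2) \<in> borel_measurable borel"
      using g_borel by measurable
    fix \<alpha> :: complex assume a: "\<alpha> \<in> circ"
    have "cmod (\<alpha> - b) \<le> 1 + cmod b" using norm_triangle_ineq4[of \<alpha> b] a by simp
    then have "(cmod (\<alpha> - b))^2 \<le> (1 + cmod b)^2" by (intro power_mono) auto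
    then show "norm (indicator B \<alpha> * (cmod (\<alpha> - b))\<^sup>2) \<le> (1 + cmod b)\<^sup>2"
      by (auto simp: indicator_def)
  qed
  have "emeasure (density (scalar_meas P y) (\<lambda>\<alpha>. ennreal ((cmod (\<alpha> - b))^2))) B
      = (\<integral>\<^sup>+\<alpha>. ennreal ((cmod (\<alpha> - b))^2) * indicator B \<alpha> \<partial>scalar_meas P y)"
    by (rule emeasure_density[OF gm Bm2])
  also have "\<dots> = (\<integral>\<^sup>+\<alpha>. ennreal (indicator B \<alpha> * (cmod (\<alpha> - b))^2) \<partial>scalar_meas P y)"
    by (intro nn_integral_cong) (auto simp: indicator_def)
  also have "\<dots> = ennreal (integral\<^sup>L (scalar_meas P y) (\<lambda>\<alpha>. indicator B \<alpha> * (cmod (\<alpha> - b))^2))"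
    by (rule nn_integral_eq_integral[OF gint]) simp
  also have "integral\<^sup>L (scalar_meas P y) (\<lambda>\<alpha>. indicator B \<alpha> * (cmod (\<alpha> - b))^2)
      = integral\<^sup>L (scalar_meas P w) (\<lambda>\<alpha>. (cmod (\<alpha> - b))^2)"
    using int_restrict[OF B g_borel, of y] by (simp add: w_def)
  also have "integral\<^sup>L (scalar_meas P w) (\<lambda>\<alpha>. (cmod (\<alpha> - b))^2) = (norm (U w - scaleC b w))^2"
  proof -
    have "complex_of_real (integral\<^sup>L (scalar_meas P w) (\<lambda>\<alpha>. (cmod (\<alpha> - b))^2))
        = integral\<^sup>L (scalar_meas P w) (\<lambda>\<alpha>. complex_of_real ((cmod (\<alpha> - b))^2))"
      by (rule integral_complex_of_real[symmetric])
    also have "\<dots> = integral\<^sup>L (scalar_meas P w) (\<lambda>\<alpha>. (1 + b * cnj b) + (- cnj b) * \<alpha> + (- b) * cnj \<alpha>)"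
    proof (rule Bochner_Integration.integral_cong[OF refl])
      fix \<alpha> assume "\<alpha> \<in> space (scalar_meas P w)"
      then have a: "cmod \<alpha> = 1" by (simp add: mu_space)
      show "complex_of_real ((cmod (\<alpha> - b))^2) = (1 + b * cnj b) + (- cnj b) * \<alpha> + (- b) * cnj \<alpha>"
        by (rule sq_expand[OF a])
    qed
    also have "\<dots> = (1 + b * cnj b) * complex_of_real ((norm w)^2) + (- cnj b) * cinner w (U w) + (- b) * cnj (cinner w (U w))"
      by (rule lin_int)
    also have "\<dots> = complex_of_real ((norm (U w - scaleC b w))^2)"
    proof -
      have c: "cinner (U w) w = cnj (cinner w (U w))" by (rule cinner_commute)
      show ?thesis unfolding norm_sq_cinner
        by (simp add: cinner_simps Ucinner c algebra_simps)
    qed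
    finally show ?thesis by (simp only: of_real_eq_iff)
  qed
  finally show "emeasure (scalar_meas P x) B = emeasure (density (scalar_meas P y) (\<lambda>\<alpha>. ennreal ((cmod (\<alpha> - b))^2))) B"
    using mu_emeasure[OF B, of x] Px by simp
qed

lemma f_int:
  assumes b: "cmod b < 1" and x: "x = U y - scaleC b y"
  shows "integral\<^sup>L (scalar_meas P x) (\<lambda>\<alpha>. (\<alpha> + b) / (\<alpha> - b)) = cinner x (x + scaleC (2*b) y)"
proof -
  have fm: "(\<lambda>\<alpha>::complex. (\<alpha> + b) / (\<alpha> - b)) \<in> borel_measurable (scalar_meas P y)"
    by (intro mu_borel) measurable
  have gm: "(\<lambda>\<alpha>. (cmod (\<alpha> - b))^2) \<in> borel_measurable (scalar_meas P y)"
    by (rule mu_borel[OF g_borel])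
  have "integral\<^sup>L (scalar_meas P x) (\<lambda>\<alpha>. (\<alpha> + b) / (\<alpha> - b))
      = integral\<^sup>L (scalar_meas P y) (\<lambda>\<alpha>. (cmod (\<alpha> - b))^2 *\<^sub>R ((\<alpha> + b) / (\<alpha> - b)))"
    unfolding mu_density[OF x] by (rule integral_density[OF fm gm]) simp
  also have "\<dots> = integral\<^sup>L (scalar_meas P y) (\<lambda>\<alpha>. (1 - b * cnj b) + (- cnj b) * \<alpha> + b * cnj \<alpha>)"
  proof (rule Bochner_Integration.integral_cong[OF refl])
    fix \<alpha> assume "\<alpha> \<in> space (scalar_meas P y)"
    then have a: "cmod \<alpha> = 1" by (simp add: mu_space)
    have ne: "\<alpha> - b \<noteq> 0" using a b by auto
    have "(cmod (\<alpha> - b))^2 *\<^sub>R ((\<alpha> + b) / (\<alpha> - b)) = (\<alpha> - b) * cnj (\<alpha> - b) * ((\<alpha> + b) / (\<alpha> - b))"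
      unfolding scaleR_conv_of_real complex_norm_square ..
    also have "\<dots> = cnj (\<alpha> - b) * (\<alpha> + b)" using ne by (simp add: field_simps)
    also have "\<dots> = \<alpha> * cnj \<alpha> - b * cnj b + (- cnj b) * \<alpha> + b * cnj \<alpha>" by (simp add: algebra_simps)
    finally show "(cmod (\<alpha> - b))^2 *\<^sub>R ((\<alpha> + b) / (\<alpha> - b)) = (1 - b * cnj b) + (- cnj b) * \<alpha> + b * cnj \<alpha>"
      using circ_mult[OF a] by simp
  qed
  also have "\<dots> = (1 - b * cnj b) * complex_of_real ((norm y)^2) + (- cnj b) * cinner y (U y) + b * cnj (cinner y (U y))"
    by (rule lin_int)
  also have "\<dots> = cinner x (x + scaleC (2*b) y)"
  proof -
    have c: "cinner (U y) y = cnj (cinner y (U y))" by (rule cinner_commute)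
    show ?thesis unfolding norm_sq_cinner x
      by (simp add: cinner_simps Ucinner c algebra_simps)
  qed
  finally show ?thesis .
qed

lemma spec_f:
  assumes b: "cmod b < 1" and xy: "x = U y - scaleC b y" and xy': "x' = U y' - scaleC b y'"
  shows "spec_integral P (\<lambda>\<alpha>. (\<alpha> + b) / (\<alpha> - b)) x x' = cinner x (x' + scaleC (2*b) y')"
proof -
  let ?X = "x + scaleC (2*b) y" and ?X' = "x' + scaleC (2*b) y'"
  have k: "integral\<^sup>L (scalar_meas P (x + scaleC c x')) (\<lambda>\<alpha>. (\<alpha> + b) / (\<alpha> - b))
      = cinner x ?X + c * cinner x ?X' + cnj c * cinner x' ?X + cnj c * c * cinner x' ?X'" for c
  proof -
    have e: "x + scaleC c x' = U (y + scaleC c y') - scaleC b (y + scaleC c y')"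
      by (simp add: xy xy' Ulin scaleC_add_right scaleC_diff_right scaleC_scaleC mult.commute)
    have e2: "(x + scaleC c x') + scaleC (2*b) (y + scaleC c y') = ?X + scaleC c ?X'"
      by (simp add: scaleC_add_right scaleC_scaleC mult.commute algebra_simps)
    show ?thesis unfolding f_int[OF b e] e2 by (rule cinner_expand)
  qed
  have i3: "\<i> ^ 3 = - \<i>" by (simp add: power3_eq_cube)
  show ?thesis unfolding spec_integral_def sum4 k
    by (simp add: i3 algebra_simps)
qed

end

lemma mat_mult_nth: "(mat c ** M) $ i $ j = c * (M $ i $ j :: 'a::comm_semiring_1)"
proof -
  have "(mat c ** M) $ i $ j = (\<Sum>k\<in>UNIV. (if i = k then c else 0) * M $ k $ j)"
    by (simp add: matrix_matrix_mult_def mat_def)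
  also have "\<dots> = (\<Sum>k\<in>UNIV. if i = k then c * M $ k $ j else 0)" by (rule sum.cong) auto
  finally show ?thesis by simp
qed

lemma mult_mat_nth: "(M ** mat c) $ i $ j = (M $ i $ j :: 'a::comm_semiring_1) * c"
proof -
  have "(M ** mat c) $ i $ j = (\<Sum>k\<in>UNIV. M $ i $ k * (if k = j then c else 0))"
    by (simp add: matrix_matrix_mult_def mat_def)
  also have "\<dots> = (\<Sum>k\<in>UNIV. if k = j then M $ i $ k * c else 0)" by (rule sum.cong) auto
  finally show ?thesis by simp
qed

lemma matrix_add_rdist: "(B + C) ** (A :: 'a::semiring_1^'n^'m) = B ** A + C ** A"
  by (simp add: matrix_matrix_mult_def vec_eq_iff sum.distrib distrib_right)

lemma mat_comm: "mat c ** M = M ** (mat c :: 'a::comm_semiring_1^'n^'n)"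
  by (simp add: vec_eq_iff mat_mult_nth mult_mat_nth mult.commute)

lemma mat_mat: "mat a ** mat b = (mat (a * b) :: 'a::comm_semiring_1^'n^'n)"
  by (simp add: vec_eq_iff mat_mult_nth) (simp add: mat_def)

lemma inv_props:
  fixes K :: "'a::comm_semiring_1^'n^'n"
  assumes "invertible K"
  shows "K ** matrix_inv K = mat 1" "matrix_inv K ** K = mat 1"
proof -
  have "\<exists>K'. K ** K' = mat 1 \<and> K' ** K = mat 1" using assms by (simp add: invertible_def)
  then have "K ** matrix_inv K = mat 1 \<and> matrix_inv K ** K = mat 1"
    unfolding matrix_inv_def by (rule someI_ex)
  then show "K ** matrix_inv K = mat 1" "matrix_inv K ** K = mat 1" by auto
qed

lemma key_matrix:
  fixes A C :: "'a::comm_ring_1^'n^'n"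
  assumes AC: "A ** C = C ** A" and i1: "invertible (mat s ** C)" and i2: "invertible (mat 2 ** C)"
  shows "mat b ** matrix_inv (mat s ** C) ** (mat s ** A) = (mat (2 * b) ** A) ** matrix_inv (mat 2 ** C)"
proof -
  let ?K = "mat s ** C" and ?G = "mat 2 ** C"
  have k: "matrix_inv ?K ** ?K = mat 1" using inv_props(2)[OF i1] .
  have g: "?G ** matrix_inv ?G = mat 1" using inv_props(1)[OF i2] .
  have e: "(mat s ** A) ** ?G = mat 2 ** (?K ** A)"
  proof -
    have "(mat s ** A) ** ?G = mat s ** (A ** (mat 2 ** C))" by (simp add: matrix_mul_assoc)
    also have "A ** (mat 2 ** C) = mat 2 ** (A ** C)" by (metis mat_comm matrix_mul_assoc)
    also have "mat s ** (mat 2 ** (A ** C)) = mat 2 ** ((mat s ** C) ** A)"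
      by (simp add: matrix_mul_assoc mat_mat AC mult.commute)
    finally show ?thesis .
  qed
  have "mat b ** matrix_inv ?K ** (mat s ** A) = (mat b ** matrix_inv ?K ** (mat s ** A)) ** (?G ** matrix_inv ?G)"
    by (simp add: g)
  also have "\<dots> = mat b ** matrix_inv ?K ** ((mat s ** A) ** ?G) ** matrix_inv ?G"
    by (simp add: matrix_mul_assoc)
  also have "\<dots> = mat b ** (matrix_inv ?K ** mat 2 ** ?K) ** A ** matrix_inv ?G"
    unfolding e by (simp add: matrix_mul_assoc)
  also have "matrix_inv ?K ** mat 2 ** ?K = mat 2"
    by (metis k mat_comm matrix_mul_assoc matrix_mul_lid matrix_mul_rid)
  also have "mat b ** mat 2 = (mat (2 * b) :: 'a^'n^'n)" by (simp add: mat_mat mult.commute)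
  finally show ?thesis by (simp add: matrix_mul_assoc mat_mat mult.commute)
qed


lemma JK_cinner:
  fixes f :: "complex^'n \<Rightarrow> 'k::cvec"
  assumes add: "\<And>a c. f (a + c) = f a + f c" and sc: "\<And>s a. f (s *s a) = scaleC s (f a)"
    and nm: "\<And>a. norm (f a) = norm a"
  shows "cinner (f (axis j 1)) (f (axis k 1)) = (if j = k then 1 else 0)"
proof -
  have re: "Re (cinner (f a) (f c)) = inner a c" for a c
  proof -
    have "(norm (f a + f c))^2 = (norm (f a))^2 + (norm (f c))^2 + 2 * Re (cinner (f a) (f c))"
      by (rule Re_cinner_norm)
    moreover have "norm (f a + f c) = norm (a + c)" using add[of a c] nm[of "a + c"] by simp
    ultimately show ?thesis using dot_norm[of a c] nm[of a] nm[of c] by simp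
  qed
  have ax: "(- \<i>) *s axis k (1::complex) = axis k (- \<i>)"
    by (simp add: vec_eq_iff axis_def vector_scalar_mult_def)
  have "Re (cinner (f (axis j 1)) (f (axis k 1))) = (if j = k then 1 else 0)"
    by (simp add: re inner_axis_axis)
  moreover have "Im (cinner (f (axis j 1)) (f (axis k 1))) = 0"
  proof -
    have "Im (cinner (f (axis j 1)) (f (axis k 1))) = Re (cinner (f (axis j 1)) (scaleC (-\<i>) (f (axis k 1))))"
      by (simp add: cinner_scaleC_right)
    also have "\<dots> = Re (cinner (f (axis j 1)) (f ((-\<i>) *s axis k 1)))" unfolding sc by (rule refl)
    also have "\<dots> = 0" unfolding re ax by (simp add: inner_axis_axis inner_complex_def)
    finally show ?thesis .
  qed
  ultimately show ?thesis by (simp add: complex_eq_iff)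
qed

context spec
begin

lemma KK1:
  assumes "U v = x" "U y - scaleC b y = x'"
  shows "cinner v (scaleC s y) = s * cinner x (x' + scaleC b y)"
proof -
  have u: "x' + scaleC b y = U y" using assms(2) by (metis diff_add_cancel)
  have "cinner v (scaleC s y) = s * cinner (U v) (U y)" by (simp add: cinner_simps Ucinner)
  then show ?thesis unfolding u assms(1) .
qed

lemma KK3:
  assumes "w - scaleC (cnj b) (U w) = x" "U y - scaleC b y = x'"
  shows "cinner w x' = cinner x (x' + scaleC b y)"
proof -
  have u: "x' + scaleC b y = U y" using assms(2) by (metis diff_add_cancel)
  show ?thesis unfolding u assms(1)[symmetric] assms(2)[symmetric] by (simp add: cinner_simps Ucinner)
qed

lemma KK4:
  assumes "w - scaleC (cnj b) (U w) = x" "U y - scaleC b y = x'" "U v = x'"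
  shows "cinner w v = cinner x y"
proof -
  have "cinner w v = cinner (U w) (U v)" by (simp add: Ucinner)
  also have "\<dots> = cinner (U w) (U y - scaleC b y)" using assms(2,3) by simp
  also have "\<dots> = cinner (w - scaleC (cnj b) (U w)) y" by (simp add: cinner_simps Ucinner)
  finally show ?thesis using assms(1) by simp
qed

end

lemma cmod_sq: "(cmod w)^2 = (Re w)^2 + (Im w)^2" by (simp add: cmod_power2)

theorem mainTheorem20:
  fixes D :: "'h::{cvec, complete_space} set" and B :: "'h \<Rightarrow> 'h"
    and J :: "complex^'n \<Rightarrow> 'h"
    and emb :: "'h \<Rightarrow> 'k::{cvec, complete_space}" and U :: "'k \<Rightarrow> 'k"
    and P :: "complex set \<Rightarrow> 'k \<Rightarrow> 'k"
    and z :: complex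
  assumes "separable_hilbert TYPE('h)"
    and "in_S CARD('n) D B"
    and "\<forall>x y. J (x + y) = J x + J y" and "\<forall>c x. J (c *s x) = scaleC c (J x)"
    and "\<forall>x. norm (J x) = norm x"
    and "range J \<subseteq> defect D B (- \<i>)"
    and "in_Ext D B emb U"
    and "spectral_measure_of U P"
    and "Im z > 0"
    and "invertible (Kern U (emb \<circ> J) (cnj z) (- \<i>))"
    and "invertible (Kern U (emb \<circ> J) \<i> z)"
    and "invertible (G_U P (emb \<circ> J) z + mat 1)"
  shows "mat (bC z) ** matrix_inv (Kern U (emb \<circ> J) (cnj z) (- \<i>)) ** Kern U (emb \<circ> J) (cnj z) \<i>
           = Phi P (emb \<circ> J) z
       \<and> Phi P (emb \<circ> J) z
           = mat (bC z) ** matrix_inv (Kern U (emb \<circ> J) \<i> z) ** Kern U (emb \<circ> J) (- \<i>) z"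
proof -
  have Uu: "unitary_op U" and embl: "clinear emb" and embn: "\<And>x. norm (emb x) = norm x"
    using assms(7) by (auto simp: in_Ext_def)
  interpret spec U P using Uu assms(8) by unfold_locales
  define b where "b = bC z"
  have q: "Im z > 0" by (rule assms(9))
  have n_z: "cmod (\<i> - cnj z) \<noteq> cmod (\<i> + cnj z)"
  proof -
    have "(cmod (\<i> - cnj z))^2 = (Re z)^2 + (1 + Im z)^2" by (simp add: cmod_sq)
    moreover have "(cmod (\<i> + cnj z))^2 = (Re z)^2 + (1 - Im z)^2" by (simp add: cmod_sq)
    moreover have "(1 + Im z)^2 \<noteq> (1 - Im z)^2" using q by (simp add: power2_eq_square algebra_simps)
    ultimately show ?thesis by auto
  qed
  have n_cz: "cmod (\<i> - cnj (cnj z)) \<noteq> cmod (\<i> + cnj (cnj z))"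
  proof -
    have "(cmod (\<i> - z))^2 = (Re z)^2 + (1 - Im z)^2" by (simp add: cmod_sq)
    moreover have "(cmod (\<i> + z))^2 = (Re z)^2 + (1 + Im z)^2" by (simp add: cmod_sq)
    moreover have "(1 + Im z)^2 \<noteq> (1 - Im z)^2" using q by (simp add: power2_eq_square algebra_simps)
    ultimately show ?thesis by auto
  qed
  have n_i: "cmod (\<i> - cnj \<i>) \<noteq> cmod (\<i> + cnj \<i>)" by simp
  have n_mi: "cmod (\<i> - cnj (- \<i>)) \<noteq> cmod (\<i> + cnj (- \<i>))" by simp
  have bl: "cmod b < 1"
  proof -
    have e1: "(cmod (z - \<i>))^2 = (Re z)^2 + (Im z - 1)^2" by (simp add: cmod_sq)
    have e2: "(cmod (z + \<i>))^2 = (Re z)^2 + (Im z + 1)^2" by (simp add: cmod_sq)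
    have "(Im z - 1)^2 < (Im z + 1)^2" using q by (simp add: power2_eq_square algebra_simps)
    then have "(cmod (z - \<i>))^2 < (cmod (z + \<i>))^2" unfolding e1 e2 by simp
    then have "cmod (z - \<i>) < cmod (z + \<i>)" by (rule power_less_imp_less_base) simp
    then show ?thesis by (simp add: b_def bC_def norm_divide divide_less_eq)
  qed
  have zi: "z + \<i> \<noteq> 0" "\<i> + z \<noteq> 0" "cnj z - \<i> \<noteq> 0" "\<i> - cnj z \<noteq> 0"
    using q by (auto simp: complex_eq_iff)
  have rb1: "b * (\<i> + z) = z - \<i>" using zi by (simp add: b_def bC_def add.commute)
  have rb2: "cnj b * (\<i> - cnj z) = - (\<i> + cnj z)"
  proof -
    have "cnj b = (cnj z + \<i>) / (cnj z - \<i>)" by (simp add: b_def bC_def)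
    then show ?thesis using zi by (simp add: field_simps)
  qed
  define L where "L = (\<lambda>w x. scaleC (\<i> - cnj w) x + scaleC (\<i> + cnj w) (U x))"
  have Linv: "L w (inv (L w) v) = v" if "cmod (\<i> - cnj w) \<noteq> cmod (\<i> + cnj w)" for w v
  proof -
    have "surj (L w)" unfolding L_def by (rule surj_combo[OF Uu that])
    then show ?thesis by (rule surj_f_inv_f)
  qed
  have Om: "Omega U (emb \<circ> J) w v = scaleC (2 * \<i>) (inv (L w) ((emb \<circ> J) v))" for w v
    by (simp add: Omega_def L_def)
  define x where "x k = (emb \<circ> J) (axis k 1)" for k
  define t where "t k = inv (L (cnj z)) (x k)" for k
  define y where "y k = scaleC (\<i> + z) (t k)" for k
  define u where "u j = inv (L z) (x j)" for j
  define w where "w j = scaleC (\<i> - cnj z) (u j)" for j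
  have Lt: "scaleC (\<i> - z) (t k) + scaleC (\<i> + z) (U (t k)) = x k" for k
    using Linv[OF n_cz, of "x k"] by (simp add: t_def L_def)
  have Lu: "scaleC (\<i> - cnj z) (u j) + scaleC (\<i> + cnj z) (U (u j)) = x j" for j
    using Linv[OF n_z, of "x j"] by (simp add: u_def L_def)
  have yrel: "U (y k) - scaleC b (y k) = x k" for k
  proof -
    have "scaleC b (y k) = scaleC (z - \<i>) (t k)" by (simp add: y_def scaleC_scaleC rb1)
    also have "\<dots> = - scaleC (\<i> - z) (t k)" using scaleC_minus_left[of "\<i> - z" "t k"] by simp
    finally show ?thesis using Lt[of k] by (simp add: y_def Ulin algebra_simps)
  qed
  have wrel: "w j - scaleC (cnj b) (U (w j)) = x j" for j
  proof -
    have "scaleC (cnj b) (U (w j)) = scaleC (- (\<i> + cnj z)) (U (u j))"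
      by (simp add: w_def Ulin scaleC_scaleC rb2)
    also have "\<dots> = - scaleC (\<i> + cnj z) (U (u j))" by (rule scaleC_minus_left)
    finally show ?thesis using Lu[of j] by (simp add: w_def algebra_simps)
  qed
  have Om_i: "Omega U (emb \<circ> J) \<i> (axis k 1) = x k" for k
  proof -
    have "L \<i> (inv (L \<i>) (x k)) = x k" by (rule Linv[OF n_i])
    then show ?thesis by (simp add: Om L_def x_def)
  qed
  have Om_mi: "U (Omega U (emb \<circ> J) (- \<i>) (axis k 1)) = x k" for k
  proof -
    have "L (- \<i>) (inv (L (- \<i>)) (x k)) = x k" by (rule Linv[OF n_mi])
    then show ?thesis by (simp add: Om L_def x_def Ulin)
  qed
  have Om_cz: "Omega U (emb \<circ> J) (cnj z) (axis k 1) = scaleC (2 * \<i> / (\<i> + z)) (y k)" for k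
    using zi by (simp add: Om x_def t_def y_def scaleC_scaleC)
  have Om_z: "Omega U (emb \<circ> J) z (axis j 1) = scaleC (2 * \<i> / (\<i> - cnj z)) (w j)" for j
    using zi by (simp add: Om x_def u_def w_def scaleC_scaleC)
  define A where "A = (\<chi> j k. cinner (x j) (y k))"
  define C where "C = (\<chi> j k. cinner (x j) (x k + scaleC b (y k)))"
  have delta: "cinner (x j) (x k) = (if j = k then 1 else 0)" for j k
  proof -
    have add: "(emb \<circ> J) (a + c) = (emb \<circ> J) a + (emb \<circ> J) c" for a c
      using assms(3) clinearD(1)[OF embl] by simp
    have sc: "(emb \<circ> J) (s *s a) = scaleC s ((emb \<circ> J) a)" for s a
      using assms(4) clinearD(2)[OF embl] by simp
    have nm: "norm ((emb \<circ> J) a) = norm a" for a using assms(5) embn by simp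
    show ?thesis unfolding x_def by (rule JK_cinner[OF add sc nm])
  qed
  have C_eq: "C = mat 1 + mat b ** A"
    by (simp add: vec_eq_iff C_def A_def mat_mult_nth cinner_simps delta) (simp add: mat_def)
  have AC: "A ** C = C ** A"
  proof -
    have c: "A ** mat b ** A = A ** A ** mat b" by (metis mat_comm matrix_mul_assoc)
    show ?thesis by (simp add: C_eq matrix_add_ldistrib matrix_add_rdist matrix_mul_assoc mat_comm c)
  qed
  have K1: "Kern U (emb \<circ> J) (cnj z) (- \<i>) = mat (2 * \<i> / (\<i> + z)) ** C"
    by (simp add: vec_eq_iff Kern_def mat_mult_nth C_def Om_cz KK1[OF Om_mi yrel])
  have K2: "Kern U (emb \<circ> J) (cnj z) \<i> = mat (2 * \<i> / (\<i> + z)) ** A"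
    by (simp add: vec_eq_iff Kern_def mat_mult_nth A_def Om_cz Om_i cinner_simps)
  have K3: "Kern U (emb \<circ> J) \<i> z = mat (cnj (2 * \<i> / (\<i> - cnj z))) ** C"
    by (simp add: vec_eq_iff Kern_def mat_mult_nth C_def Om_z Om_i cinner_simps KK3[OF wrel yrel])
  have K4: "Kern U (emb \<circ> J) (- \<i>) z = mat (cnj (2 * \<i> / (\<i> - cnj z))) ** A"
    by (simp add: vec_eq_iff Kern_def mat_mult_nth A_def Om_z cinner_simps KK4[OF wrel yrel Om_mi])
  have Gent: "G_U P (emb \<circ> J) z $ j $ k = cinner (x j) (x k + scaleC (2 * b) (y k))" for j k
    using spec_f[OF bl yrel[of j, symmetric] yrel[of k, symmetric]] by (simp add: G_U_def x_def b_def)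
  have Gp: "G_U P (emb \<circ> J) z + mat 1 = mat 2 ** C"
    by (simp add: vec_eq_iff Gent mat_mult_nth C_def cinner_simps delta) (simp add: mat_def)
  have Gm: "G_U P (emb \<circ> J) z - mat 1 = mat (2 * b) ** A"
    by (simp add: vec_eq_iff Gent mat_mult_nth A_def cinner_simps delta) (simp add: mat_def)
  have i1: "invertible (mat (2 * \<i> / (\<i> + z)) ** C)" using assms(10) K1 by simp
  have i2: "invertible (mat 2 ** C)" using assms(12) Gp by simp
  have i3: "invertible (mat (cnj (2 * \<i> / (\<i> - cnj z))) ** C)" using assms(11) K3 by simp
  show ?thesis
    unfolding Phi_def b_def[symmetric] K1 K2 K3 K4 Gp Gm
    using key_matrix[OF AC i1 i2, of b] key_matrix[OF AC i3 i2, of b] by simp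
qed


end
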